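(* Let $(A, \|\cdot\|)$ be a non-archimedean Banach ring, and let $r := (r_1, \ldots, r_n) \in \mathbb{R}^n_{>0}$. Let $\rho$ and $\rho_r$ denote the spectral radii on $A$ and on $A_r := A\{r^{-1}T, rT^{-1}\}$, respectively. Then for any $f = \sum_{\nu\in\mathbb{Z}^n} a_\nu T^\nu \in A_r$, we have \[ \rho_r(f) = \max\{\rho(a_\nu) r^\nu \mid \nu \in \mathbb{Z}^n\}. \]
   Context: $A\{r^{-1}T, rT^{-1}\}$ denotes the Banach ring of Laurent series $\sum_{\nu \in \mathbb{Z}^n} a_\nu T^\nu$ with $a_\nu \in A$ such that $\|a_\nu\| r^\nu \to 0$ as $|\nu| \to \infty$, with norm $\max_\nu \|a_\nu\| r^\nu$, where $r^\nu = r_1^{\nu_1}\cdots r_n^{\nu_n}$. The spectral radius of an element $f$ of a normed ring $(B,\|\cdot\|)$ is $\rho(f) = \lim_{l\to\infty}\|f^l\|^{1/l}$. *)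

theory Defs
  imports Complex_Main
begin

definition nonarch_banach_ring :: "('a::comm_ring_1 \<Rightarrow> real) \<Rightarrow> bool" where
  "nonarch_banach_ring N \<longleftrightarrow>
     (\<forall>x. 0 \<le> N x) \<and> (\<forall>x. N x = 0 \<longleftrightarrow> x = 0) \<and> (\<forall>x. N (- x) = N x) \<and>
     (\<forall>x y. N (x + y) \<le> max (N x) (N y)) \<and>
     (\<forall>x y. N (x * y) \<le> N x * N y) \<and>
     (\<forall>X :: nat \<Rightarrow> 'a. (\<forall>e>0. \<exists>M. \<forall>m\<ge>M. \<forall>k\<ge>M. N (X m - X k) < e) \<longrightarrow>
         (\<exists>L. (\<lambda>k. N (X k - L)) \<longlonglongrightarrow> 0))"

definition rmono :: "('n::finite \<Rightarrow> real) \<Rightarrow> ('n \<Rightarrow> int) \<Rightarrow> real" where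
  "rmono r \<nu> = (\<Prod>i\<in>UNIV. r i powi \<nu> i)"

text \<open>Carrier of A{r^-1 T, r T^-1}: coefficient families with N(a_\<nu>) r^\<nu> \<rightarrow> 0 as |\<nu>| \<rightarrow> \<infinity>.\<close>
definition laurent_ring :: "('a::comm_ring_1 \<Rightarrow> real) \<Rightarrow> ('n::finite \<Rightarrow> real) \<Rightarrow> (('n \<Rightarrow> int) \<Rightarrow> 'a) set" where
  "laurent_ring N r = {f. \<forall>e>0. finite {\<nu>. e \<le> N (f \<nu>) * rmono r \<nu>}}"

text \<open>The norm max_\<nu> N(a_\<nu>) r^\<nu> (the maximum exists on the carrier).\<close>
definition laurent_norm :: "('a::comm_ring_1 \<Rightarrow> real) \<Rightarrow> ('n::finite \<Rightarrow> real) \<Rightarrow> (('n \<Rightarrow> int) \<Rightarrow> 'a) \<Rightarrow> real" where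
  "laurent_norm N r f = Sup (range (\<lambda>\<nu>. N (f \<nu>) * rmono r \<nu>))"

definition has_nsum :: "('a::comm_ring_1 \<Rightarrow> real) \<Rightarrow> ('b \<Rightarrow> 'a) \<Rightarrow> 'b set \<Rightarrow> 'a \<Rightarrow> bool" where
  "has_nsum N g S s \<longleftrightarrow> (\<forall>e>0. \<exists>F. finite F \<and> F \<subseteq> S \<and>
      (\<forall>G. finite G \<and> F \<subseteq> G \<and> G \<subseteq> S \<longrightarrow> N (sum g G - s) < e))"

definition laurent_mult :: "('a::comm_ring_1 \<Rightarrow> real) \<Rightarrow> (('n \<Rightarrow> int) \<Rightarrow> 'a) \<Rightarrow> (('n \<Rightarrow> int) \<Rightarrow> 'a) \<Rightarrow> (('n \<Rightarrow> int) \<Rightarrow> 'a)" where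
  "laurent_mult N f g = (\<lambda>\<nu>. THE s. has_nsum N (\<lambda>\<mu>. f \<mu> * g (\<lambda>i. \<nu> i - \<mu> i)) UNIV s)"

definition laurent_one :: "('n \<Rightarrow> int) \<Rightarrow> 'a::comm_ring_1" where
  "laurent_one = (\<lambda>\<nu>. if \<nu> = (\<lambda>_. 0) then 1 else 0)"

definition laurent_pow :: "('a::comm_ring_1 \<Rightarrow> real) \<Rightarrow> (('n \<Rightarrow> int) \<Rightarrow> 'a) \<Rightarrow> nat \<Rightarrow> (('n \<Rightarrow> int) \<Rightarrow> 'a)" where
  "laurent_pow N f l = (laurent_mult N f ^^ l) laurent_one"

definition spectral_radius :: "('b \<Rightarrow> real) \<Rightarrow> ('b \<Rightarrow> nat \<Rightarrow> 'b) \<Rightarrow> 'b \<Rightarrow> real" where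
  "spectral_radius Nm pw x = lim (\<lambda>l. Nm (pw x l) powr (1 / real l))"

end

theory Submission
  imports Defs
begin

locale nab =
  fixes N :: "'a::comm_ring_1 \<Rightarrow> real"
  assumes nab: "nonarch_banach_ring N"
begin

lemma N_nonneg: "0 \<le> N x" using nab unfolding nonarch_banach_ring_def by blast
lemma N_zero_iff: "N x = 0 \<longleftrightarrow> x = 0" using nab unfolding nonarch_banach_ring_def by blast
lemma N_0[simp]: "N 0 = 0" using N_zero_iff by blast
lemma N_uminus[simp]: "N (- x) = N x" using nab unfolding nonarch_banach_ring_def by blast
lemma N_add: "N (x + y) \<le> max (N x) (N y)" using nab unfolding nonarch_banach_ring_def by blast
lemma N_mult: "N (x * y) \<le> N x * N y" using nab unfolding nonarch_banach_ring_def by blast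
lemma N_complete: "(\<forall>e>0. \<exists>M. \<forall>m\<ge>M. \<forall>k\<ge>M. N (X m - X k) < e) \<Longrightarrow> (\<exists>L. (\<lambda>k. N (X k - L)) \<longlonglongrightarrow> 0)"
  using nab unfolding nonarch_banach_ring_def by blast

lemma N_minus_commute: "N (x - y) = N (y - x)"
  by (metis N_uminus minus_diff_eq)

lemma N_diff: "N (x - y) \<le> max (N x) (N y)"
  using N_add[of x "- y"] by simp

lemma N_sum_le: "finite F \<Longrightarrow> 0 \<le> B \<Longrightarrow> (\<And>t. t \<in> F \<Longrightarrow> N (g t) \<le> B) \<Longrightarrow> N (sum g F) \<le> B"
proof (induction F rule: finite_induct)
  case empty then show ?case by simp
next
  case (insert x F)
  have "N (g x) \<le> B" "N (sum g F) \<le> B" using insert by auto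
  then show ?case using N_add[of "g x" "sum g F"] insert(1,2) by simp
qed

lemma N_sum_less: "finite F \<Longrightarrow> 0 < B \<Longrightarrow> (\<And>t. t \<in> F \<Longrightarrow> N (g t) < B) \<Longrightarrow> N (sum g F) < B"
proof (induction F rule: finite_induct)
  case empty then show ?case by simp
next
  case (insert x F)
  have "N (g x) < B" "N (sum g F) < B" using insert by auto
  then show ?case using N_add[of "g x" "sum g F"] insert(1,2) by simp
qed

lemma N_of_nat_mult: "N (of_nat m * x) \<le> N x"
proof (induction m)
  case 0 then show ?case by (simp add: N_nonneg)
next
  case (Suc m)
  then show ?case using N_add[of x "of_nat m * x"] by (simp add: algebra_simps)
qed

lemma N_prod_le: "finite F \<Longrightarrow> N (prod g F) \<le> N 1 * (\<Prod>t\<in>F. N (g t))"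
proof (induction F rule: finite_induct)
  case empty then show ?case by simp
next
  case (insert x F)
  have "N (prod g (insert x F)) = N (g x * prod g F)" using insert by simp
  also have "\<dots> \<le> N (g x) * N (prod g F)" by (rule N_mult)
  also have "\<dots> \<le> N (g x) * (N 1 * (\<Prod>t\<in>F. N (g t)))"
    using insert by (intro mult_left_mono) (auto simp: N_nonneg)
  finally show ?case using insert by (simp add: algebra_simps)
qed

lemma N_pow_le: "N (x ^ Suc n) \<le> N x ^ Suc n"
proof (induction n)
  case 0 then show ?case by simp
next
  case (Suc n)
  have "N (x ^ Suc (Suc n)) \<le> N x * N (x ^ Suc n)" using N_mult by (metis power_Suc)
  also have "\<dots> \<le> N x * N x ^ Suc n" using Suc by (intro mult_left_mono) (auto simp: N_nonneg)
  finally show ?case by simp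
qed

lemma N_pow_le': "N (x ^ n) \<le> max (N 1) 1 * N x ^ n"
proof (cases n)
  case 0 then show ?thesis by simp
next
  case (Suc m)
  then have "N (x ^ n) \<le> N x ^ n" using N_pow_le by simp
  also have "\<dots> \<le> max (N 1) 1 * N x ^ n" using N_nonneg[of x]
      mult_right_mono[of 1 "max (N 1) 1" "N x ^ n"] by simp
  finally show ?thesis .
qed

end

context nab
begin

lemma has_nsum_unique:
  assumes "has_nsum N g S s" "has_nsum N g S s'"
  shows "s = s'"
proof -
  have "N (s - s') < e" if "e > 0" for e
  proof -
    obtain F where F: "finite F" "F \<subseteq> S" "\<And>G. finite G \<and> F \<subseteq> G \<and> G \<subseteq> S \<Longrightarrow> N (sum g G - s) < e"
      using assms(1)[unfolded has_nsum_def, rule_format, OF \<open>e>0\<close>] by blast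
    obtain F' where F': "finite F'" "F' \<subseteq> S" "\<And>G. finite G \<and> F' \<subseteq> G \<and> G \<subseteq> S \<Longrightarrow> N (sum g G - s') < e"
      using assms(2)[unfolded has_nsum_def, rule_format, OF \<open>e>0\<close>] by blast
    have 1: "N (sum g (F \<union> F') - s) < e" using F(1,2) F'(1,2) by (intro F(3)) auto
    have 2: "N (sum g (F \<union> F') - s') < e" using F(1,2) F'(1,2) by (intro F'(3)) auto
    have "N (s - s') = N ((sum g (F \<union> F') - s') - (sum g (F \<union> F') - s))" by simp
    also have "\<dots> \<le> max (N (sum g (F \<union> F') - s')) (N (sum g (F \<union> F') - s))"
      by (rule N_diff)
    finally show ?thesis using 1 2 by simp
  qed
  note A = this
  have "N (s - s') \<le> 0"
  proof (rule ccontr)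
    assume "\<not> N (s - s') \<le> 0"
    then have "N (s - s') > 0" by simp
    from A[OF this] show False by simp
  qed
  then have "N (s - s') = 0" using N_nonneg[of "s - s'"] by simp
  then show ?thesis using N_zero_iff by simp
qed

lemma has_nsum_The:
  assumes "has_nsum N g S s"
  shows "(THE s. has_nsum N g S s) = s"
proof (rule the_equality)
  show "has_nsum N g S s" by (rule assms)
  fix x assume "has_nsum N g S x"
  then show "x = s" using assms by (rule has_nsum_unique)
qed

lemma has_nsum_exists:
  assumes H: "\<And>e. e > 0 \<Longrightarrow> finite {t. e \<le> N (g t)}"
  shows "\<exists>s. has_nsum N g UNIV s"
proof -
  define F where "F k = {t. 1 / real (Suc k) \<le> N (g t)}" for k
  define X where "X k = sum g (F k)" for k
  have finF: "finite (F k)" for k unfolding F_def by (rule H) simp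
  have Fmono: "F k \<subseteq> F m" if "k \<le> m" for k m
  proof -
    have "1 / real (Suc m) \<le> 1 / real (Suc k)" using that by (intro divide_left_mono) auto
    then show ?thesis unfolding F_def by auto
  qed
  have small: "N (g t) < 1 / real (Suc k)" if "t \<notin> F k" for t k
    using that unfolding F_def by auto
  have diffb: "N (X m - X k) < 1 / real (Suc k)" if "k \<le> m" for k m
  proof -
    have "X m - X k = sum g (F m - F k)" unfolding X_def
      using Fmono[OF that] finF by (simp add: sum_diff)
    also have "N \<dots> < 1 / real (Suc k)"
      using finF small by (intro N_sum_less) auto
    finally show ?thesis .
  qed
  have "\<forall>e>0. \<exists>M. \<forall>m\<ge>M. \<forall>k\<ge>M. N (X m - X k) < e"
  proof (intro allI impI)
    fix e :: real assume "e > 0"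
    then obtain M where M: "inverse (real (Suc M)) < e" using reals_Archimedean by blast
    have "N (X m - X k) < e" if "m \<ge> M" "k \<ge> M" for m k
    proof (cases "k \<le> m")
      case True
      have "1 / real (Suc k) \<le> 1 / real (Suc M)" using that by (intro divide_left_mono) auto
      then show ?thesis using diffb[OF True] M by (simp add: inverse_eq_divide)
    next
      case False
      have "1 / real (Suc m) \<le> 1 / real (Suc M)" using that by (intro divide_left_mono) auto
      then show ?thesis using diffb[of m k] False M N_minus_commute[of "X m" "X k"]
        by (simp add: inverse_eq_divide)
    qed
    then show "\<exists>M. \<forall>m\<ge>M. \<forall>k\<ge>M. N (X m - X k) < e" by blast
  qed
  then obtain L where L: "(\<lambda>k. N (X k - L)) \<longlonglongrightarrow> 0" using N_complete by blast
  have "has_nsum N g UNIV L"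
    unfolding has_nsum_def
  proof (intro allI impI)
    fix e :: real assume "e > 0"
    then obtain k0 where k0: "inverse (real (Suc k0)) < e" using reals_Archimedean by blast
    have "eventually (\<lambda>k. N (X k - L) < e) sequentially"
      using order_tendstoD(2)[OF L \<open>e>0\<close>] .
    then obtain k1 where k1: "\<And>k. k \<ge> k1 \<Longrightarrow> N (X k - L) < e" by (auto simp: eventually_sequentially)
    define k where "k = max k0 k1"
    have kL: "N (X k - L) < e" using k1 k_def by simp
    have kk: "1 / real (Suc k) < e"
    proof -
      have "1 / real (Suc k) \<le> 1 / real (Suc k0)" unfolding k_def by (intro divide_left_mono) auto
      then show ?thesis using k0 by (simp add: inverse_eq_divide)
    qed
    show "\<exists>F'. finite F' \<and> F' \<subseteq> UNIV \<and> (\<forall>G. finite G \<and> F' \<subseteq> G \<and> G \<subseteq> UNIV \<longrightarrow> N (sum g G - L) < e)"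
    proof (intro exI[of _ "F k"] conjI allI impI)
      fix G assume G: "finite G \<and> F k \<subseteq> G \<and> G \<subseteq> UNIV"
      have eq: "sum g G - L = sum g (G - F k) + (X k - L)"
        unfolding X_def using G by (simp add: sum_diff)
      have lt: "N (sum g (G - F k)) < e"
        using G \<open>e>0\<close> by (intro N_sum_less) (auto intro: less_trans[OF small kk])
      have "max (N (sum g (G - F k))) (N (X k - L)) < e" using kL lt by simp
      then show "N (sum g G - L) < e" unfolding eq using N_add[of "sum g (G - F k)" "X k - L"]
        by (rule le_less_trans[rotated])
    qed (use finF in auto)
  qed
  then show ?thesis by blast
qed

lemma has_nsum_cmult:
  assumes "has_nsum N g S s"
  shows "has_nsum N (\<lambda>t. c * g t) S (c * s)"
proof (cases "c = 0")
  case True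
  then show ?thesis unfolding has_nsum_def by (auto intro!: exI[of _ "{}"])
next
  case False
  then have cpos: "N c > 0" using N_zero_iff N_nonneg by (metis less_eq_real_def)
  show ?thesis unfolding has_nsum_def
  proof (intro allI impI)
    fix e :: real assume "e > 0"
    then have ep: "e / N c > 0" using cpos by simp
    obtain F where F: "finite F" "F \<subseteq> S" "\<And>G. finite G \<and> F \<subseteq> G \<and> G \<subseteq> S \<Longrightarrow> N (sum g G - s) < e / N c"
      using assms[unfolded has_nsum_def, rule_format, OF ep] by blast
    have "N (sum (\<lambda>t. c * g t) G - c * s) < e" if "finite G \<and> F \<subseteq> G \<and> G \<subseteq> S" for G
    proof -
      have "N (sum (\<lambda>t. c * g t) G - c * s) = N (c * (sum g G - s))"
        by (simp add: sum_distrib_left right_diff_distrib)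
      also have "\<dots> \<le> N c * N (sum g G - s)" by (rule N_mult)
      also have "\<dots> < N c * (e / N c)" using F(3)[OF that] cpos by (intro mult_strict_left_mono) auto
      also have "\<dots> = e" using cpos by simp
      finally show ?thesis .
    qed
    then show "\<exists>F. finite F \<and> F \<subseteq> S \<and> (\<forall>G. finite G \<and> F \<subseteq> G \<and> G \<subseteq> S \<longrightarrow> N (sum (\<lambda>t. c * g t) G - c * s) < e)"
      using F by blast
  qed
qed

lemma has_nsum_diff:
  assumes "has_nsum N g S s" "has_nsum N h S s'"
  shows "has_nsum N (\<lambda>t. g t - h t) S (s - s')"
  unfolding has_nsum_def
proof (intro allI impI)
  fix e :: real assume "e > 0"
  obtain F where F: "finite F" "F \<subseteq> S" "\<And>G. finite G \<and> F \<subseteq> G \<and> G \<subseteq> S \<Longrightarrow> N (sum g G - s) < e"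
    using assms(1)[unfolded has_nsum_def, rule_format, OF \<open>e>0\<close>] by blast
  obtain F' where F': "finite F'" "F' \<subseteq> S" "\<And>G. finite G \<and> F' \<subseteq> G \<and> G \<subseteq> S \<Longrightarrow> N (sum h G - s') < e"
    using assms(2)[unfolded has_nsum_def, rule_format, OF \<open>e>0\<close>] by blast
  have "N (sum (\<lambda>t. g t - h t) G - (s - s')) < e" if G: "finite G \<and> F \<union> F' \<subseteq> G \<and> G \<subseteq> S" for G
  proof -
    have eq: "sum (\<lambda>t. g t - h t) G - (s - s') = (sum g G - s) - (sum h G - s')"
      by (simp add: sum_subtractf)
    have a: "N (sum g G - s) < e" using G by (intro F(3)) auto
    have b: "N (sum h G - s') < e" using G by (intro F'(3)) auto
    show ?thesis unfolding eq using N_diff[of "sum g G - s" "sum h G - s'"] a b by simp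
  qed
  then show "\<exists>F. finite F \<and> F \<subseteq> S \<and> (\<forall>G. finite G \<and> F \<subseteq> G \<and> G \<subseteq> S \<longrightarrow> N (sum (\<lambda>t. g t - h t) G - (s - s')) < e)"
    using F F' by (intro exI[of _ "F \<union> F'"]) auto
qed

lemma has_nsum_finite:
  assumes "finite K"
  shows "has_nsum N (\<lambda>t. if t \<in> K then h t else 0) UNIV (sum h K)"
proof -
  have "N (sum (\<lambda>t. if t \<in> K then h t else 0) G - sum h K) < e"
    if "e > 0" "finite G" "K \<subseteq> G" for e G
  proof -
    have "sum (\<lambda>t. if t \<in> K then h t else 0) G = sum h (G \<inter> K)"
      using that(2) by (rule sum.inter_restrict[symmetric])
    also have "G \<inter> K = K" using that(3) by blast
    finally show ?thesis using that(1) by simp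
  qed
  then show ?thesis unfolding has_nsum_def using assms by blast
qed

end

lemma pow_powr_inv: "0 \<le> (L::real) \<Longrightarrow> l \<ge> 1 \<Longrightarrow> (L ^ l) powr (1 / real l) = L"
proof (cases "L = 0")
  case True assume "l \<ge> 1" with True show ?thesis by simp
next
  case False
  assume "0 \<le> L" "l \<ge> 1"
  then have "L > 0" using False by simp
  then have "(L ^ l) powr (1 / real l) = (L powr real l) powr (1 / real l)" by (simp add: powr_realpow)
  also have "\<dots> = L" using \<open>l \<ge> 1\<close> \<open>L > 0\<close> by (simp add: powr_powr)
  finally show ?thesis .
qed

lemma powr_inv_pow: "0 \<le> (x::real) \<Longrightarrow> l \<ge> 1 \<Longrightarrow> (x powr (1 / real l)) ^ l = x"
proof (cases "x = 0")
  case True assume "l \<ge> 1" with True show ?thesis by simp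
next
  case False
  assume "0 \<le> x" "l \<ge> 1"
  then have "x > 0" using False by simp
  then have "(x powr (1 / real l)) ^ l = (x powr (1 / real l)) powr real l" by (simp add: powr_realpow)
  also have "\<dots> = x" using \<open>l \<ge> 1\<close> \<open>x > 0\<close> by (simp add: powr_powr)
  finally show ?thesis .
qed

lemma GL:
  fixes x :: "nat \<Rightarrow> real"
  assumes x0: "\<And>l. 0 \<le> x l" and L0: "0 \<le> L"
    and low: "\<And>l. l \<ge> 1 \<Longrightarrow> L ^ l \<le> x l"
    and up: "\<And>\<delta>. \<delta> > 0 \<Longrightarrow> \<exists>C. \<forall>l. x l \<le> C * (L + \<delta>) ^ l"
  shows "(\<lambda>l. x l powr (1 / real l)) \<longlonglongrightarrow> L"
  unfolding tendsto_iff
proof (intro allI impI)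
  fix e :: real assume "e > 0"
  define \<delta> where "\<delta> = e / 2"
  have "\<delta> > 0" using \<open>e>0\<close> by (simp add: \<delta>_def)
  obtain C where C: "\<And>l. x l \<le> C * (L + \<delta>) ^ l" using up[OF \<open>\<delta>>0\<close>] by blast
  define C' where "C' = max C 1"
  have C'pos: "C' > 0" by (simp add: C'_def)
  have C': "x l \<le> C' * (L + \<delta>) ^ l" for l
  proof -
    have "C * (L + \<delta>) ^ l \<le> C' * (L + \<delta>) ^ l" unfolding C'_def
      using L0 \<open>\<delta>>0\<close> by (intro mult_right_mono) auto
    then show ?thesis using C[of l] by simp
  qed
  have lim1: "(\<lambda>l. C' powr (1 / real l)) \<longlonglongrightarrow> C' powr 0"
    using C'pos by (intro tendsto_powr lim_1_over_n tendsto_const) auto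
  have "(L + e) / (L + \<delta>) > 1" using L0 \<open>\<delta>>0\<close> \<open>e>0\<close> by (simp add: \<delta>_def field_simps)
  then have ev1: "eventually (\<lambda>l. C' powr (1 / real l) < (L + e) / (L + \<delta>)) sequentially"
    using order_tendstoD(2)[OF lim1] C'pos by simp
  have ev2: "eventually (\<lambda>l. l \<ge> 1) sequentially" by (simp add: eventually_ge_at_top)
  show "eventually (\<lambda>l. dist (x l powr (1 / real l)) L < e) sequentially"
    using ev1 ev2
  proof eventually_elim
    case (elim l)
    have lo: "L \<le> x l powr (1 / real l)"
    proof -
      have "L = (L ^ l) powr (1 / real l)" using pow_powr_inv L0 elim by simp
      also have "\<dots> \<le> x l powr (1 / real l)" using low[of l] elim L0 by (intro powr_mono2) auto
      finally show ?thesis .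
    qed
    have "x l powr (1 / real l) \<le> (C' * (L + \<delta>) ^ l) powr (1 / real l)"
      using C'[of l] x0[of l] by (intro powr_mono2) auto
    also have "\<dots> = C' powr (1 / real l) * ((L + \<delta>) ^ l) powr (1 / real l)"
      using C'pos L0 \<open>\<delta>>0\<close> by (simp add: powr_mult)
    also have "\<dots> = C' powr (1 / real l) * (L + \<delta>)"
      using pow_powr_inv[of "L + \<delta>" l] L0 \<open>\<delta>>0\<close> elim by simp
    also have "\<dots> < (L + e) / (L + \<delta>) * (L + \<delta>)"
      using elim L0 \<open>\<delta>>0\<close> by (intro mult_strict_right_mono) auto
    also have "\<dots> = L + e" using L0 \<open>\<delta>>0\<close> by simp
    finally have "x l powr (1 / real l) < L + e" .
    then show ?case using lo by (simp add: dist_real_def)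
  qed
qed

context nab
begin

definition R :: "'a \<Rightarrow> real" where
  "R a = spectral_radius N (\<lambda>a l. a ^ l) a"

lemma fekete:
  fixes a :: 'a
  defines "L \<equiv> Inf {N (a ^ l) powr (1 / real l) | l. l \<ge> 1}"
  shows "0 \<le> L" "\<And>l. l \<ge> 1 \<Longrightarrow> L ^ l \<le> N (a ^ l)"
    "\<And>\<delta>. \<delta> > 0 \<Longrightarrow> \<exists>C. \<forall>l. N (a ^ l) \<le> C * (L + \<delta>) ^ l"
proof -
  define X where "X = {N (a ^ l) powr (1 / real l) | l. l \<ge> 1}"
  have Xne: "X \<noteq> {}" unfolding X_def by auto
  have Xbdd: "bdd_below X" unfolding X_def bdd_below_def by (auto intro!: exI[of _ 0])
  have LX: "L = Inf X" unfolding L_def X_def ..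
  show L0: "0 \<le> L" unfolding LX using Xne by (intro cInf_greatest) (auto simp: X_def)
  show "L ^ l \<le> N (a ^ l)" if "l \<ge> 1" for l
  proof -
    have "L \<le> N (a ^ l) powr (1 / real l)" unfolding LX using Xbdd that
      by (intro cInf_lower) (auto simp: X_def)
    then have "L ^ l \<le> (N (a ^ l) powr (1 / real l)) ^ l" using L0 by (intro power_mono) auto
    also have "\<dots> = N (a ^ l)" using powr_inv_pow N_nonneg that by simp
    finally show ?thesis .
  qed
  show "\<exists>C. \<forall>l. N (a ^ l) \<le> C * (L + \<delta>) ^ l" if "\<delta> > 0" for \<delta>
  proof -
    define q where "q = L + \<delta>"
    have qpos: "q > 0" using L0 that by (simp add: q_def)
    have "Inf X < q" using LX that by (simp add: q_def)
    then obtain y where "y \<in> X" "y < q" using cInf_lessD[OF Xne] by blast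
    then obtain m where m: "m \<ge> 1" "N (a ^ m) powr (1 / real m) < q" unfolding X_def by auto
    have Nm: "N (a ^ m) \<le> q ^ m"
    proof -
      have "N (a ^ m) = (N (a ^ m) powr (1 / real m)) ^ m" using powr_inv_pow N_nonneg m(1) by simp
      also have "\<dots> \<le> q ^ m" using m(2) by (intro power_mono) auto
      finally show ?thesis .
    qed
    define D where "D = max (N 1) 1"
    define C where "C = D * (\<Sum>s<m. N (a ^ s) / q ^ s)"
    have "N (a ^ l) \<le> C * q ^ l" for l
    proof -
      define k where "k = l div m"
      define s where "s = l mod m"
      have s_lt: "s < m" using m(1) by (simp add: s_def)
      have l_eq: "l = m * k + s" by (simp add: k_def s_def)
      have "a ^ l = (a ^ m) ^ k * a ^ s" unfolding l_eq by (simp add: power_add power_mult)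
      then have "N (a ^ l) \<le> N ((a ^ m) ^ k) * N (a ^ s)" using N_mult[of "(a ^ m) ^ k" "a ^ s"] by simp
      also have "\<dots> \<le> (D * N (a ^ m) ^ k) * N (a ^ s)"
        unfolding D_def by (intro mult_right_mono N_pow_le' N_nonneg)
      also have "\<dots> \<le> (D * (q ^ m) ^ k) * N (a ^ s)"
        by (intro mult_right_mono mult_left_mono power_mono Nm N_nonneg) (auto simp: D_def)
      also have "\<dots> = D * (N (a ^ s) / q ^ s) * q ^ l"
        using qpos unfolding l_eq power_add power_mult[symmetric] by (simp add: field_simps)
      also have "\<dots> \<le> C * q ^ l"
      proof -
        have "N (a ^ s) / q ^ s \<le> (\<Sum>s<m. N (a ^ s) / q ^ s)"
          using s_lt qpos by (intro member_le_sum) (auto intro: divide_nonneg_pos N_nonneg)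
        then show ?thesis unfolding C_def using qpos
          by (intro mult_right_mono mult_left_mono) (auto simp: D_def)
      qed
      finally show ?thesis .
    qed
    then show ?thesis unfolding q_def by blast
  qed
qed

lemma R_props:
  shows "0 \<le> R a" "\<And>l. l \<ge> 1 \<Longrightarrow> R a ^ l \<le> N (a ^ l)"
    "\<And>\<delta>. \<delta> > 0 \<Longrightarrow> \<exists>C. \<forall>l. N (a ^ l) \<le> C * (R a + \<delta>) ^ l"
    "(\<lambda>l. N (a ^ l) powr (1 / real l)) \<longlonglongrightarrow> R a"
proof -
  define L where "L = Inf {N (a ^ l) powr (1 / real l) | l. l \<ge> 1}"
  note F = fekete[where a=a, folded L_def]
  have lim: "(\<lambda>l. N (a ^ l) powr (1 / real l)) \<longlonglongrightarrow> L"
    using F by (intro GL) (auto simp: N_nonneg)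
  then have RL: "R a = L" unfolding R_def spectral_radius_def by (simp add: limI)
  show "0 \<le> R a" "\<And>l. l \<ge> 1 \<Longrightarrow> R a ^ l \<le> N (a ^ l)"
    "\<And>\<delta>. \<delta> > 0 \<Longrightarrow> \<exists>C. \<forall>l. N (a ^ l) \<le> C * (R a + \<delta>) ^ l"
    "(\<lambda>l. N (a ^ l) powr (1 / real l)) \<longlonglongrightarrow> R a"
    using F lim unfolding RL by auto
qed

end

lemma eps_prod_le:
  fixes x a b :: real
  assumes "a \<ge> 0" "b \<ge> 0" "\<And>\<delta>. \<delta> > 0 \<Longrightarrow> x \<le> (a + \<delta>) * (b + \<delta>)"
  shows "x \<le> a * b"
proof (rule field_le_epsilon)
  fix e :: real assume "e > 0"
  define \<delta> where "\<delta> = min 1 (e / (a + b + 1))"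
  have dpos: "\<delta> > 0" using assms \<open>e>0\<close> by (simp add: \<delta>_def)
  have d1: "\<delta> \<le> 1" by (simp add: \<delta>_def)
  have d2: "\<delta> * (a + b + 1) \<le> e" using assms \<open>e>0\<close>
    by (simp add: \<delta>_def le_divide_eq min_def mult.commute)
  have "(a + \<delta>) * (b + \<delta>) = a * b + \<delta> * (a + b + \<delta>)" by (simp add: algebra_simps)
  also have "\<delta> * (a + b + \<delta>) \<le> \<delta> * (a + b + 1)" using dpos d1 by (intro mult_left_mono) auto
  finally show "x \<le> a * b + e" using assms(3)[OF dpos] d2 by linarith
qed

context nab
begin

lemma R_nonneg: "0 \<le> R a" using R_props(1) .

lemma R_bound:
  assumes "q > 0" "\<And>l. N (a ^ l) \<le> C * q ^ l"
  shows "R a \<le> q"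
proof (rule ccontr)
  assume "\<not> R a \<le> q"
  then have gt: "R a / q > 1" using assms(1) by simp
  obtain n where n: "\<bar>C\<bar> + 1 < (R a / q) ^ n" using real_arch_pow[OF gt] by blast
  have "n \<noteq> 0"
  proof
    assume "n = 0"
    with n show False by simp
  qed
  then have "R a ^ n \<le> C * q ^ n" using R_props(2)[of n a] assms(2)[of n] by simp
  then have "(R a / q) ^ n \<le> C" using assms(1) by (simp add: power_divide divide_le_eq)
  then show False using n by linarith
qed

lemma R_le_N: "R a \<le> N a"
  using R_props(2)[of 1 a] by simp

lemma R_uminus: "R (- a) = R a"
proof -
  have "N ((- a) ^ l) = N (a ^ l)" for l
    by (cases "even l") (auto simp: power_minus')
  then show ?thesis unfolding R_def spectral_radius_def by simp
qed

lemma R_zero[simp]: "R 0 = 0"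
  using R_le_N[of 0] R_nonneg[of 0] by simp

lemma R_mult: "R (a * b) \<le> R a * R b"
proof (rule eps_prod_le[OF R_nonneg R_nonneg])
  fix \<delta> :: real assume "\<delta> > 0"
  obtain Ca where Ca: "\<And>l. N (a ^ l) \<le> Ca * (R a + \<delta>) ^ l" using R_props(3)[OF \<open>\<delta>>0\<close>] by blast
  obtain Cb where Cb: "\<And>l. N (b ^ l) \<le> Cb * (R b + \<delta>) ^ l" using R_props(3)[OF \<open>\<delta>>0\<close>] by blast
  have Ca0: "Ca \<ge> 0" using Ca[of 0] N_nonneg[of 1] by simp
  have "N ((a * b) ^ l) \<le> (Ca * Cb) * ((R a + \<delta>) * (R b + \<delta>)) ^ l" for l
  proof -
    have "N ((a * b) ^ l) \<le> N (a ^ l) * N (b ^ l)" by (simp add: power_mult_distrib N_mult)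
    also have "\<dots> \<le> (Ca * (R a + \<delta>) ^ l) * (Cb * (R b + \<delta>) ^ l)"
      using Ca Cb Ca0 \<open>\<delta>>0\<close> R_nonneg[of a] by (intro mult_mono N_nonneg) auto
    also have "\<dots> = (Ca * Cb) * ((R a + \<delta>) * (R b + \<delta>)) ^ l"
      by (simp add: power_mult_distrib mult_ac)
    finally show ?thesis .
  qed
  then show "R (a * b) \<le> (R a + \<delta>) * (R b + \<delta>)"
    using \<open>\<delta>>0\<close> R_nonneg[of a] R_nonneg[of b] by (intro R_bound) (auto intro: mult_pos_pos)
qed

lemma R_add: "R (a + b) \<le> max (R a) (R b)"
proof (rule field_le_epsilon)
  fix \<delta> :: real assume "\<delta> > 0"
  define m where "m = max (R a) (R b)"
  obtain Ca where Ca: "\<And>l. N (a ^ l) \<le> Ca * (R a + \<delta>) ^ l" using R_props(3)[OF \<open>\<delta>>0\<close>] by blast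
  obtain Cb where Cb: "\<And>l. N (b ^ l) \<le> Cb * (R b + \<delta>) ^ l" using R_props(3)[OF \<open>\<delta>>0\<close>] by blast
  have Ca0: "Ca \<ge> 0" using Ca[of 0] N_nonneg[of 1] by simp
  have Cb0: "Cb \<ge> 0" using Cb[of 0] N_nonneg[of 1] by simp
  have "N ((a + b) ^ l) \<le> (Ca * Cb) * (m + \<delta>) ^ l" for l
  proof -
    have "(a + b) ^ l = (\<Sum>k\<le>l. of_nat (l choose k) * a ^ k * b ^ (l - k))"
      by (rule binomial_ring)
    also have "N \<dots> \<le> (Ca * Cb) * (m + \<delta>) ^ l"
    proof (rule N_sum_le)
      show "0 \<le> Ca * Cb * (m + \<delta>) ^ l" using Ca0 Cb0 \<open>\<delta>>0\<close> R_nonneg[of a]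
        by (simp add: m_def)
      fix k assume "k \<in> {..l}"
      then have kl: "k \<le> l" by simp
      have "N (of_nat (l choose k) * a ^ k * b ^ (l - k)) \<le> N (a ^ k * b ^ (l - k))"
        using N_of_nat_mult[of "l choose k" "a ^ k * b ^ (l - k)"] by (simp add: mult.assoc)
      also have "\<dots> \<le> N (a ^ k) * N (b ^ (l - k))" by (rule N_mult)
      also have "\<dots> \<le> (Ca * (R a + \<delta>) ^ k) * (Cb * (R b + \<delta>) ^ (l - k))"
        using Ca Cb Ca0 \<open>\<delta>>0\<close> R_nonneg[of a] by (intro mult_mono N_nonneg) auto
      also have "\<dots> \<le> (Ca * (m + \<delta>) ^ k) * (Cb * (m + \<delta>) ^ (l - k))"
        using Ca0 Cb0 \<open>\<delta>>0\<close> R_nonneg[of a] R_nonneg[of b]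
        by (intro mult_mono mult_left_mono power_mono) (auto simp: m_def)
      also have "\<dots> = (Ca * Cb) * (m + \<delta>) ^ l"
        using kl by (simp add: algebra_simps power_add[symmetric])
      finally show "N (of_nat (l choose k) * a ^ k * b ^ (l - k)) \<le> (Ca * Cb) * (m + \<delta>) ^ l" .
    qed simp
    finally show ?thesis .
  qed
  then show "R (a + b) \<le> max (R a) (R b) + \<delta>"
    using \<open>\<delta>>0\<close> R_nonneg[of a] by (intro R_bound) (auto simp: m_def)
qed

lemma R_diff: "R (a - b) \<le> max (R a) (R b)"
  using R_add[of a "- b"] R_uminus[of b] by simp

lemma R_pow_ge: "k \<ge> 1 \<Longrightarrow> R a ^ k \<le> R (a ^ k)"
proof -
  assume k: "k \<ge> 1"
  have lim: "(\<lambda>l. N ((a ^ k) ^ l) powr (1 / real l)) \<longlonglongrightarrow> R (a ^ k)" by (rule R_props(4))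
  show ?thesis
  proof (rule LIMSEQ_le_const[OF lim], intro exI allI impI)
    fix l :: nat assume "l \<ge> 1"
    have "(R a ^ k) ^ l \<le> N ((a ^ k) ^ l)"
      using R_props(2)[of "k * l" a] k \<open>l\<ge>1\<close> by (simp add: power_mult)
    then have "((R a ^ k) ^ l) powr (1 / real l) \<le> N ((a ^ k) ^ l) powr (1 / real l)"
      using R_nonneg[of a] by (intro powr_mono2) auto
    then show "R a ^ k \<le> N ((a ^ k) ^ l) powr (1 / real l)"
      using pow_powr_inv[of "R a ^ k" l] R_nonneg[of a] \<open>l\<ge>1\<close> by simp
  qed
qed

lemma R_sum_le: "finite F \<Longrightarrow> 0 \<le> B \<Longrightarrow> (\<And>t. t \<in> F \<Longrightarrow> R (g t) \<le> B) \<Longrightarrow> R (sum g F) \<le> B"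
proof (induction F rule: finite_induct)
  case empty then show ?case by simp
next
  case (insert x F)
  have "R (g x) \<le> B" "R (sum g F) \<le> B" using insert by auto
  then show ?case using R_add[of "g x" "sum g F"] insert(1,2) by simp
qed

lemma R_has_nsum:
  assumes "has_nsum N g S s" "0 \<le> B" "\<And>t. t \<in> S \<Longrightarrow> R (g t) \<le> B"
  shows "R s \<le> B"
proof -
  have "R s \<le> max B e" if "e > 0" for e
  proof -
    obtain F where F: "finite F" "F \<subseteq> S" "\<And>G. finite G \<and> F \<subseteq> G \<and> G \<subseteq> S \<Longrightarrow> N (sum g G - s) < e"
      using assms(1)[unfolded has_nsum_def, rule_format, OF \<open>e>0\<close>] by blast
    have 1: "R (sum g F) \<le> B" using F assms by (intro R_sum_le) auto
    have "N (sum g F - s) < e" using F by (intro F(3)) auto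
    then have 2: "R (s - sum g F) \<le> e"
      using R_le_N[of "s - sum g F"] N_minus_commute[of s "sum g F"] by simp
    have "R s = R (sum g F + (s - sum g F))" by simp
    also have "\<dots> \<le> max (R (sum g F)) (R (s - sum g F))" by (rule R_add)
    finally show ?thesis using 1 2 by linarith
  qed
  note A = this
  show ?thesis
  proof (rule field_le_epsilon)
    fix e :: real assume "e > 0"
    then show "R s \<le> B + e" using A[OF \<open>e>0\<close>] assms(2) by simp
  qed
qed

end

lemma rmono_pos: "(\<And>i. 0 < r i) \<Longrightarrow> 0 < rmono r \<nu>"
  unfolding rmono_def by (intro prod_pos) auto

lemma rmono_add: "(\<And>i. 0 < r i) \<Longrightarrow> rmono r (\<lambda>i. a i + b i) = rmono r a * rmono r b"
  unfolding rmono_def by (simp add: power_int_add prod.distrib less_imp_neq[symmetric])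

lemma rmono_diff: "(\<And>i. 0 < r i) \<Longrightarrow> rmono r (\<lambda>i. a i - b i) * rmono r b = rmono r a"
  using rmono_add[of r "\<lambda>i. a i - b i" b] by simp

lemma rmono_zero: "rmono r (\<lambda>_. 0) = 1"
  unfolding rmono_def by simp

lemma rmono_smul: "(\<And>i. 0 < r i) \<Longrightarrow> rmono r (\<lambda>i. int n * a i) = rmono r a ^ n"
proof (induction n)
  case 0 then show ?case using rmono_zero[of r] by simp
next
  case (Suc n)
  have "rmono r (\<lambda>i. int (Suc n) * a i) = rmono r (\<lambda>i. a i + int n * a i)"
    by (simp add: algebra_simps)
  also have "\<dots> = rmono r a * rmono r (\<lambda>i. int n * a i)" by (rule rmono_add[of r, OF Suc.prems])
  finally show ?case using Suc by simp
qed

lemma rmono_sum: "finite K \<Longrightarrow> (\<And>i. 0 < r i) \<Longrightarrow> rmono r (\<lambda>i. \<Sum>k\<in>K. g k i) = (\<Prod>k\<in>K. rmono r (g k))"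
proof (induction K rule: finite_induct)
  case empty then show ?case using rmono_zero[of r] by simp
next
  case (insert x F)
  then show ?case using rmono_add[of r "g x" "\<lambda>i. \<Sum>k\<in>F. g k i"] by simp
qed

context nab
begin

lemma N_has_nsum:
  assumes "has_nsum N g S s" "0 \<le> B" "\<And>t. t \<in> S \<Longrightarrow> N (g t) \<le> B"
  shows "N s \<le> B"
proof -
  have "N s \<le> max B e" if "e > 0" for e
  proof -
    obtain F where F: "finite F" "F \<subseteq> S" "\<And>G. finite G \<and> F \<subseteq> G \<and> G \<subseteq> S \<Longrightarrow> N (sum g G - s) < e"
      using assms(1)[unfolded has_nsum_def, rule_format, OF \<open>e>0\<close>] by blast
    have 1: "N (sum g F) \<le> B" using F assms by (intro N_sum_le) auto
    have "N (sum g F - s) < e" using F by (intro F(3)) auto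
    then have 2: "N (s - sum g F) \<le> e"
      using N_minus_commute[of s "sum g F"] by simp
    have "N s = N (sum g F + (s - sum g F))" by simp
    also have "\<dots> \<le> max (N (sum g F)) (N (s - sum g F))" by (rule N_add)
    finally show ?thesis using 1 2 by linarith
  qed
  note A = this
  show ?thesis
  proof (rule field_le_epsilon)
    fix e :: real assume "e > 0"
    then show "N s \<le> B + e" using A[OF \<open>e>0\<close>] assms(2) by simp
  qed
qed

end

locale lctx = nab N for N :: "'a::comm_ring_1 \<Rightarrow> real" +
  fixes r :: "'n::finite \<Rightarrow> real" and f :: "('n \<Rightarrow> int) \<Rightarrow> 'a"
  assumes rpos: "\<And>i. 0 < r i" and fL: "f \<in> laurent_ring N r"
begin

abbreviation rm where "rm \<equiv> rmono r"

lemma rm_pos: "0 < rm \<nu>" using rmono_pos rpos by blast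

lemma rm_add: "rm (\<lambda>i. a i + b i) = rm a * rm b"
  by (rule rmono_add) (rule rpos)

lemma rm_diff: "rm (\<lambda>i. a i - b i) * rm b = rm a"
  by (rule rmono_diff) (rule rpos)

lemma ffin: "e > 0 \<Longrightarrow> finite {\<nu>. e \<le> N (f \<nu>) * rm \<nu>}"
  using fL unfolding laurent_ring_def by blast

definition p where "p l = laurent_pow N f l"

lemma p_0: "p 0 = laurent_one" unfolding p_def laurent_pow_def by simp
lemma p_Suc: "p (Suc l) = laurent_mult N f (p l)" unfolding p_def laurent_pow_def by simp

lemma mult_exists:
  fixes q :: "('n \<Rightarrow> int) \<Rightarrow> 'a" and \<nu> :: "'n \<Rightarrow> int"
  assumes B: "\<And>\<nu>. N (q \<nu>) * rm \<nu> \<le> B"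
  shows "has_nsum N (\<lambda>\<mu>. f \<mu> * q (\<lambda>i. \<nu> i - \<mu> i)) UNIV (laurent_mult N f q \<nu>)"
proof -
  have B0: "0 \<le> B" using B[of \<nu>] N_nonneg[of "q \<nu>"] rm_pos[of \<nu>] by (smt (verit) mult_nonneg_nonneg)
  have tb: "N (f \<mu> * q (\<lambda>i. \<nu> i - \<mu> i)) \<le> (N (f \<mu>) * rm \<mu>) * (B / rm \<nu>)" for \<mu>
  proof -
    have "N (f \<mu> * q (\<lambda>i. \<nu> i - \<mu> i)) \<le> N (f \<mu>) * N (q (\<lambda>i. \<nu> i - \<mu> i))" by (rule N_mult)
    also have "\<dots> \<le> N (f \<mu>) * (B / rm (\<lambda>i. \<nu> i - \<mu> i))"
      using B[of "\<lambda>i. \<nu> i - \<mu> i"] rm_pos by (intro mult_left_mono N_nonneg) (simp_all add: pos_le_divide_eq)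
    also have "B / rm (\<lambda>i. \<nu> i - \<mu> i) = rm \<mu> * (B / rm \<nu>)"
    proof -
      have e: "rm \<nu> = rm \<mu> * rm (\<lambda>i. \<nu> i - \<mu> i)" using rm_diff[of \<nu> \<mu>] by (simp add: mult.commute)
      show ?thesis unfolding e using rm_pos[of \<mu>] rm_pos[of "\<lambda>i. \<nu> i - \<mu> i"] by simp
    qed
    finally show ?thesis by (simp add: algebra_simps)
  qed
  have fin: "finite {\<mu>. e \<le> N (f \<mu> * q (\<lambda>i. \<nu> i - \<mu> i))}" if "e > 0" for e
  proof (cases "B = 0")
    case True
    then have "{\<mu>. e \<le> N (f \<mu> * q (\<lambda>i. \<nu> i - \<mu> i))} = {}" using tb that by (auto simp: not_le intro: le_less_trans)
    then show ?thesis by simp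
  next
    case False
    then have Bp: "B > 0" using B0 by simp
    have "{\<mu>. e \<le> N (f \<mu> * q (\<lambda>i. \<nu> i - \<mu> i))} \<subseteq> {\<mu>. e * rm \<nu> / B \<le> N (f \<mu>) * rm \<mu>}"
    proof safe
      fix \<mu> assume "e \<le> N (f \<mu> * q (\<lambda>i. \<nu> i - \<mu> i))"
      then have "e \<le> (N (f \<mu>) * rm \<mu>) * (B / rm \<nu>)" using tb[of \<mu>] by linarith
      then show "e * rm \<nu> / B \<le> N (f \<mu>) * rm \<mu>" using Bp rm_pos[of \<nu>]
        by (simp add: field_simps)
    qed
    moreover have "finite {\<mu>. e * rm \<nu> / B \<le> N (f \<mu>) * rm \<mu>}"
      using that Bp rm_pos[of \<nu>] by (intro ffin) simp
    ultimately show ?thesis by (rule finite_subset)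
  qed
  obtain s where "has_nsum N (\<lambda>\<mu>. f \<mu> * q (\<lambda>i. \<nu> i - \<mu> i)) UNIV s"
    using has_nsum_exists[of "\<lambda>\<mu>. f \<mu> * q (\<lambda>i. \<nu> i - \<mu> i)", OF fin] by blast
  note hs = this
  have "(THE s. has_nsum N (\<lambda>\<mu>. f \<mu> * q (\<lambda>i. \<nu> i - \<mu> i)) UNIV s) = s" by (rule has_nsum_The[OF hs])
  then show ?thesis unfolding laurent_mult_def using hs by simp
qed

end

context lctx
begin

definition w where "w \<nu> = R (f \<nu>) * rm \<nu>"

lemma w_nonneg: "0 \<le> w \<nu>" unfolding w_def using R_nonneg rm_pos by (simp add: less_imp_le)

lemma w_le: "w \<nu> \<le> N (f \<nu>) * rm \<nu>" unfolding w_def using R_le_N rm_pos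
  by (intro mult_right_mono) (auto simp: less_imp_le)

lemma ex_max: "\<exists>\<nu>m. \<forall>\<nu>. w \<nu> \<le> w \<nu>m"
proof (cases "\<forall>\<nu>. w \<nu> = 0")
  case True then show ?thesis by auto
next
  case False
  then obtain \<nu>1 where "w \<nu>1 \<noteq> 0" by blast
  then have pos: "w \<nu>1 > 0" using w_nonneg[of \<nu>1] by simp
  define T where "T = {\<nu>. w \<nu>1 \<le> w \<nu>}"
  have "T \<subseteq> {\<nu>. w \<nu>1 \<le> N (f \<nu>) * rm \<nu>}" unfolding T_def using w_le by (auto intro: order_trans)
  then have finT: "finite T" using ffin[OF pos] by (rule finite_subset)
  have neT: "\<nu>1 \<in> T" by (simp add: T_def)
  have "Max (w ` T) \<in> w ` T" using finT neT by (intro Max_in) auto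
  then obtain \<nu>m where \<nu>m: "\<nu>m \<in> T" "w \<nu>m = Max (w ` T)" by auto
  have "w \<nu> \<le> w \<nu>m" for \<nu>
  proof (cases "\<nu> \<in> T")
    case True then show ?thesis using \<nu>m finT by (simp add: Max_ge)
  next
    case False then show ?thesis using \<nu>m(1) by (auto simp: T_def)
  qed
  then show ?thesis by blast
qed

definition M where "M = w (SOME \<nu>m. \<forall>\<nu>. w \<nu> \<le> w \<nu>m)"

lemma M_ge: "w \<nu> \<le> M"
  unfolding M_def using someI_ex[OF ex_max] by blast

lemma M_att: "\<exists>\<nu>. w \<nu> = M" unfolding M_def by blast

lemma M_nonneg: "0 \<le> M" using M_ge[of undefined] w_nonneg[of undefined] by linarith

lemma UB:
  assumes "\<delta> > 0"
  shows "\<exists>C>0. \<forall>l \<nu>. N (p l \<nu>) * rm \<nu> \<le> C * (M + \<delta>) ^ l"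
proof -
  define q where "q = M + \<delta>"
  have qpos: "q > 0" using M_nonneg assms by (simp add: q_def)
  define K where "K = {\<kappa>. \<delta> \<le> N (f \<kappa>) * rm \<kappa>}"
  have finK: "finite K" unfolding K_def using ffin[OF assms] .
  have ex: "\<forall>\<kappa>\<in>K. \<exists>C. \<forall>j. N (f \<kappa> ^ j) * rm \<kappa> ^ j \<le> C * q ^ j"
  proof
    fix \<kappa> assume "\<kappa> \<in> K"
    define d where "d = \<delta> / rm \<kappa>"
    have dpos: "d > 0" using assms rm_pos[of \<kappa>] by (simp add: d_def)
    obtain C where C: "\<And>j. N (f \<kappa> ^ j) \<le> C * (R (f \<kappa>) + d) ^ j" using R_props(3)[OF dpos] by blast
    have C0: "C \<ge> 0" using C[of 0] N_nonneg[of 1] by simp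
    have "N (f \<kappa> ^ j) * rm \<kappa> ^ j \<le> C * q ^ j" for j
    proof -
      have "N (f \<kappa> ^ j) * rm \<kappa> ^ j \<le> C * (R (f \<kappa>) + d) ^ j * rm \<kappa> ^ j"
        using C[of j] rm_pos[of \<kappa>] by (intro mult_right_mono) auto
      also have "\<dots> = C * ((R (f \<kappa>) + d) * rm \<kappa>) ^ j" by (simp add: power_mult_distrib)
      also have "(R (f \<kappa>) + d) * rm \<kappa> = w \<kappa> + \<delta>"
        using rm_pos[of \<kappa>] by (simp add: d_def w_def algebra_simps)
      also have "C * (w \<kappa> + \<delta>) ^ j \<le> C * q ^ j"
        using C0 M_ge[of \<kappa>] w_nonneg[of \<kappa>] assms
        by (intro mult_left_mono power_mono) (auto simp: q_def)
      finally show ?thesis .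
    qed
    then show "\<exists>C. \<forall>j. N (f \<kappa> ^ j) * rm \<kappa> ^ j \<le> C * q ^ j" by blast
  qed
  obtain Cf where Cf: "\<And>\<kappa> j. \<kappa> \<in> K \<Longrightarrow> N (f \<kappa> ^ j) * rm \<kappa> ^ j \<le> Cf \<kappa> * q ^ j"
    using bchoice[OF ex] by blast
  have Cf0: "\<kappa> \<in> K \<Longrightarrow> 0 \<le> Cf \<kappa>" for \<kappa> using Cf[of \<kappa> 0] N_nonneg[of 1] by simp
  define E where "E e = (\<Prod>\<kappa>\<in>K. f \<kappa> ^ e \<kappa>)" for e :: "('n \<Rightarrow> int) \<Rightarrow> nat"
  define sz where "sz e = (\<Sum>\<kappa>\<in>K. e \<kappa>)" for e :: "('n \<Rightarrow> int) \<Rightarrow> nat"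
  define wt where "wt e = (\<lambda>i. \<Sum>\<kappa>\<in>K. int (e \<kappa>) * \<kappa> i)" for e :: "('n \<Rightarrow> int) \<Rightarrow> nat"
  define C0 where "C0 = (N 1 + 1) * (\<Prod>\<kappa>\<in>K. Cf \<kappa> + 1)"
  have C0pos: "C0 > 0" unfolding C0_def using Cf0 N_nonneg[of 1]
    by (intro mult_pos_pos prod_pos) (auto simp: add_nonneg_pos)
  have base: "N (E e) * rm (wt e) \<le> C0 * q ^ sz e" for e
  proof -
    have rw: "rm (wt e) = (\<Prod>\<kappa>\<in>K. rm \<kappa> ^ e \<kappa>)"
      unfolding wt_def using finK rpos by (simp add: rmono_sum rmono_smul)
    have "N (E e) * rm (wt e) \<le> (N 1 * (\<Prod>\<kappa>\<in>K. N (f \<kappa> ^ e \<kappa>))) * rm (wt e)"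
      unfolding E_def using finK rm_pos by (intro mult_right_mono N_prod_le) (auto simp: less_imp_le)
    also have "\<dots> = N 1 * (\<Prod>\<kappa>\<in>K. N (f \<kappa> ^ e \<kappa>) * rm \<kappa> ^ e \<kappa>)"
      unfolding rw by (simp add: prod.distrib)
    also have "\<dots> \<le> (N 1 + 1) * (\<Prod>\<kappa>\<in>K. (Cf \<kappa> + 1) * q ^ e \<kappa>)"
    proof -
      have P: "(\<Prod>\<kappa>\<in>K. N (f \<kappa> ^ e \<kappa>) * rm \<kappa> ^ e \<kappa>) \<le> (\<Prod>\<kappa>\<in>K. (Cf \<kappa> + 1) * q ^ e \<kappa>)"
      proof (rule prod_mono)
        fix \<kappa> assume k: "\<kappa> \<in> K"
        have a: "0 \<le> N (f \<kappa> ^ e \<kappa>) * rm \<kappa> ^ e \<kappa>" using rm_pos[of \<kappa>] N_nonneg by simp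
        have "Cf \<kappa> * q ^ e \<kappa> \<le> (Cf \<kappa> + 1) * q ^ e \<kappa>" using qpos by (intro mult_right_mono) auto
        then have b: "N (f \<kappa> ^ e \<kappa>) * rm \<kappa> ^ e \<kappa> \<le> (Cf \<kappa> + 1) * q ^ e \<kappa>" using Cf[OF k, of "e \<kappa>"] by linarith
        show "0 \<le> N (f \<kappa> ^ e \<kappa>) * rm \<kappa> ^ e \<kappa> \<and> N (f \<kappa> ^ e \<kappa>) * rm \<kappa> ^ e \<kappa> \<le> (Cf \<kappa> + 1) * q ^ e \<kappa>"
          using a b by simp
      qed
      have Q: "0 \<le> (\<Prod>\<kappa>\<in>K. N (f \<kappa> ^ e \<kappa>) * rm \<kappa> ^ e \<kappa>)"
        using rm_pos N_nonneg by (intro prod_nonneg) (simp add: less_imp_le)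
      show ?thesis using P Q N_nonneg[of 1] by (intro mult_mono) auto
    qed
    also have "\<dots> = C0 * q ^ sz e"
      unfolding C0_def sz_def by (simp add: prod.distrib power_sum)
    finally show ?thesis .
  qed
  have E0: "E (\<lambda>_. 0) = 1" unfolding E_def by simp
  have sz0: "sz (\<lambda>_. 0) = 0" unfolding sz_def by simp
  have wt0: "wt (\<lambda>_. 0) = (\<lambda>_. 0)" unfolding wt_def by simp
  have upd: "E (e(\<mu> := Suc (e \<mu>))) = f \<mu> * E e \<and> sz (e(\<mu> := Suc (e \<mu>))) = Suc (sz e) \<and>
             wt (e(\<mu> := Suc (e \<mu>))) = (\<lambda>i. wt e i + \<mu> i)" if "\<mu> \<in> K" for e \<mu>
  proof (intro conjI ext)
    define e' where "e' = e(\<mu> := Suc (e \<mu>))"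
    have eq: "\<kappa> \<in> K - {\<mu>} \<Longrightarrow> e' \<kappa> = e \<kappa>" for \<kappa> by (auto simp: e'_def)
    have "E e' = f \<mu> ^ e' \<mu> * (\<Prod>\<kappa>\<in>K - {\<mu>}. f \<kappa> ^ e' \<kappa>)"
      unfolding E_def using finK that by (rule prod.remove)
    also have "\<dots> = f \<mu> * (f \<mu> ^ e \<mu> * (\<Prod>\<kappa>\<in>K - {\<mu>}. f \<kappa> ^ e \<kappa>))"
      using eq by (simp add: e'_def)
    also have "f \<mu> ^ e \<mu> * (\<Prod>\<kappa>\<in>K - {\<mu>}. f \<kappa> ^ e \<kappa>) = E e"
      unfolding E_def using finK that by (rule prod.remove[symmetric])
    finally show "E e' = f \<mu> * E e" .
    have "sz e' = e' \<mu> + (\<Sum>\<kappa>\<in>K - {\<mu>}. e' \<kappa>)"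
      unfolding sz_def using finK that by (rule sum.remove)
    also have "\<dots> = Suc (e \<mu> + (\<Sum>\<kappa>\<in>K - {\<mu>}. e \<kappa>))"
      using eq by (simp add: e'_def)
    also have "e \<mu> + (\<Sum>\<kappa>\<in>K - {\<mu>}. e \<kappa>) = sz e"
      unfolding sz_def using finK that by (rule sum.remove[symmetric])
    finally show "sz e' = Suc (sz e)" .
    fix i
    have "wt e' i = int (e' \<mu>) * \<mu> i + (\<Sum>\<kappa>\<in>K - {\<mu>}. int (e' \<kappa>) * \<kappa> i)"
      unfolding wt_def using finK that by (rule sum.remove)
    also have "\<dots> = (int (e \<mu>) * \<mu> i + (\<Sum>\<kappa>\<in>K - {\<mu>}. int (e \<kappa>) * \<kappa> i)) + \<mu> i"
      using eq by (simp add: e'_def algebra_simps)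
    also have "int (e \<mu>) * \<mu> i + (\<Sum>\<kappa>\<in>K - {\<mu>}. int (e \<kappa>) * \<kappa> i) = wt e i"
      unfolding wt_def using finK that by (rule sum.remove[symmetric])
    finally show "wt e' i = wt e i + \<mu> i" .
  qed
  have claim: "\<forall>\<nu> e. N (E e * p l \<nu>) * rm (\<lambda>i. \<nu> i + wt e i) \<le> C0 * q ^ (l + sz e)" for l
  proof (induction l)
    case 0
    show ?case
    proof (intro allI)
      fix \<nu> e
      show "N (E e * p 0 \<nu>) * rm (\<lambda>i. \<nu> i + wt e i) \<le> C0 * q ^ (0 + sz e)"
      proof (cases "\<nu> = (\<lambda>_. 0)")
        case True
        then show ?thesis using base[of e] by (simp add: p_0 laurent_one_def)
      next
        case False
        then show ?thesis using C0pos qpos by (simp add: p_0 laurent_one_def less_imp_le)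
      qed
    qed
  next
    case (Suc l)
    have bnd: "N (p l \<nu>) * rm \<nu> \<le> C0 * q ^ l" for \<nu>
      using Suc[THEN spec[of _ \<nu>], THEN spec[of _ "\<lambda>_. 0"]] by (simp add: E0 sz0 wt0)
    show ?case
    proof (intro allI)
      fix \<nu> e
      let ?W = "rm (\<lambda>i. \<nu> i + wt e i)"
      have Wpos: "?W > 0" by (rule rm_pos)
      have hs: "has_nsum N (\<lambda>\<mu>. f \<mu> * p l (\<lambda>i. \<nu> i - \<mu> i)) UNIV (p (Suc l) \<nu>)"
        unfolding p_Suc by (rule mult_exists[OF bnd])
      have hs2: "has_nsum N (\<lambda>\<mu>. E e * (f \<mu> * p l (\<lambda>i. \<nu> i - \<mu> i))) UNIV (E e * p (Suc l) \<nu>)"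
        by (rule has_nsum_cmult[OF hs])
      have "N (E e * p (Suc l) \<nu>) \<le> C0 * q ^ (Suc l + sz e) / ?W"
      proof (rule N_has_nsum[OF hs2])
        show "0 \<le> C0 * q ^ (Suc l + sz e) / ?W" using C0pos qpos Wpos by simp
        fix \<mu> :: "'n \<Rightarrow> int"
        show "N (E e * (f \<mu> * p l (\<lambda>i. \<nu> i - \<mu> i))) \<le> C0 * q ^ (Suc l + sz e) / ?W"
        proof (cases "\<mu> \<in> K")
          case True
          define e' where "e' = e(\<mu> := Suc (e \<mu>))"
          have u: "E e' = f \<mu> * E e" "sz e' = Suc (sz e)" "wt e' = (\<lambda>i. wt e i + \<mu> i)"
            using upd[OF True, of e] unfolding e'_def by auto
          have IH: "N (E e' * p l (\<lambda>i. \<nu> i - \<mu> i)) * rm (\<lambda>i. \<nu> i - \<mu> i + wt e' i) \<le> C0 * q ^ (l + sz e')"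
            using Suc[THEN spec[of _ "\<lambda>i. \<nu> i - \<mu> i"], THEN spec[of _ e']] by simp
          have eq1: "E e * (f \<mu> * p l (\<lambda>i. \<nu> i - \<mu> i)) = E e' * p l (\<lambda>i. \<nu> i - \<mu> i)"
            unfolding u by (simp add: mult_ac)
          have eq2: "(\<lambda>i. \<nu> i - \<mu> i + wt e' i) = (\<lambda>i. \<nu> i + wt e i)" unfolding u by auto
          have eq3: "l + sz e' = Suc l + sz e" unfolding u by simp
          have "N (E e' * p l (\<lambda>i. \<nu> i - \<mu> i)) * ?W \<le> C0 * q ^ (Suc l + sz e)"
            using IH unfolding eq2 eq3 .
          then show ?thesis unfolding eq1 using Wpos by (simp add: pos_le_divide_eq)
        next
          case False
          let ?Y = "E e * p l (\<lambda>i. \<nu> i - \<mu> i)"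
          let ?V = "rm (\<lambda>i. \<nu> i - \<mu> i + wt e i)"
          have fm: "N (f \<mu>) * rm \<mu> \<le> q" using False M_nonneg unfolding K_def q_def by simp
          have Y: "N ?Y * ?V \<le> C0 * q ^ (l + sz e)"
            using Suc[THEN spec[of _ "\<lambda>i. \<nu> i - \<mu> i"], THEN spec[of _ e]] by simp
          have WV: "?W = rm \<mu> * ?V"
            using rm_add[of \<mu> "\<lambda>i. \<nu> i - \<mu> i + wt e i"] by simp
          have "N (E e * (f \<mu> * p l (\<lambda>i. \<nu> i - \<mu> i))) * ?W = N (f \<mu> * ?Y) * ?W"
            by (simp add: algebra_simps)
          also have "\<dots> \<le> (N (f \<mu>) * N ?Y) * ?W"
            using Wpos by (intro mult_right_mono N_mult) auto
          also have "\<dots> = (N (f \<mu>) * rm \<mu>) * (N ?Y * ?V)" unfolding WV by (simp add: algebra_simps)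
          also have "\<dots> \<le> q * (C0 * q ^ (l + sz e))"
            using fm Y qpos by (intro mult_mono[OF fm Y]) (auto simp: N_nonneg rm_pos less_imp_le)
          also have "\<dots> = C0 * q ^ (Suc l + sz e)" by simp
          finally show ?thesis using Wpos by (simp add: pos_le_divide_eq)
        qed
      qed
      then show "N (E e * p (Suc l) \<nu>) * ?W \<le> C0 * q ^ (Suc l + sz e)"
        using Wpos by (simp add: pos_le_divide_eq)
    qed
  qed
  have "N (p l \<nu>) * rm \<nu> \<le> C0 * q ^ l" for l \<nu>
    using claim[of l, THEN spec[of _ \<nu>], THEN spec[of _ "\<lambda>_. 0"]] by (simp add: E0 sz0 wt0)
  then show ?thesis using C0pos unfolding q_def by blast
qed

end

primrec useq :: "(('n \<Rightarrow> int) \<Rightarrow> 'a::comm_ring_1) \<Rightarrow> ('n \<Rightarrow> int) set \<Rightarrow> nat \<Rightarrow> ('n \<Rightarrow> int) \<Rightarrow> 'a" where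
  "useq f S 0 = laurent_one"
| "useq f S (Suc l) = (\<lambda>\<nu>. \<Sum>\<mu>\<in>S. f \<mu> * useq f S l (\<lambda>i. \<nu> i - \<mu> i))"

context lctx
begin

lemma R_one: "R 1 \<le> 1"
  by (rule R_bound[where C = "N 1"]) auto

lemma prod_bound:
  assumes "R (f \<mu>) * rm \<mu> \<le> A" "R y * rm (\<lambda>i. \<nu> i - \<mu> i) \<le> B" "0 \<le> A"
  shows "R (f \<mu> * y) * rm \<nu> \<le> A * B"
proof -
  have e: "rm \<nu> = rm \<mu> * rm (\<lambda>i. \<nu> i - \<mu> i)" using rm_diff[of \<nu> \<mu>] by (simp add: mult.commute)
  have "R (f \<mu> * y) * rm \<nu> \<le> (R (f \<mu>) * R y) * rm \<nu>"
    using R_mult rm_pos[of \<nu>] by (intro mult_right_mono) (auto simp: less_imp_le)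
  also have "\<dots> = (R (f \<mu>) * rm \<mu>) * (R y * rm (\<lambda>i. \<nu> i - \<mu> i))" unfolding e by (simp add: mult_ac)
  also have "\<dots> \<le> A * B"
    using assms R_nonneg rm_pos by (intro mult_mono) (auto simp: less_imp_le)
  finally show ?thesis .
qed

lemma R_div: "R x * rm a \<le> c \<longleftrightarrow> R x \<le> c / rm a"
  using rm_pos[of a] by (simp add: pos_le_divide_eq)

lemma LB:
  assumes Mpos: "M > 0"
  shows "\<exists>\<nu>0. \<forall>l\<ge>1. M ^ l \<le> N (p l (\<lambda>i. int l * \<nu>0 i)) * rm (\<lambda>i. int l * \<nu>0 i)"
proof -
  define S where "S = {\<nu>. w \<nu> = M}"
  have finS: "finite S"
  proof -
    have "S \<subseteq> {\<nu>. M \<le> N (f \<nu>) * rm \<nu>}"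
    proof
      fix x assume "x \<in> S"
      then have "w x = M" by (simp add: S_def)
      then show "x \<in> {\<nu>. M \<le> N (f \<nu>) * rm \<nu>}" using w_le[of x] by simp
    qed
    then show ?thesis using ffin[OF Mpos] by (rule finite_subset)
  qed
  have neS: "S \<noteq> {}" using M_att unfolding S_def by auto
  obtain M' where M': "0 \<le> M'" "M' < M" "\<And>\<nu>. \<nu> \<notin> S \<Longrightarrow> w \<nu> \<le> M'"
  proof -
    define T where "T = {\<nu>. M / 2 \<le> w \<nu>}"
    have "T \<subseteq> {\<nu>. M / 2 \<le> N (f \<nu>) * rm \<nu>}" unfolding T_def using w_le by (auto intro: order_trans)
    then have finT: "finite T" using ffin[of "M / 2"] Mpos by (auto intro: finite_subset)
    define M'' where "M'' = Max (insert (M / 2) (w ` (T - S)))"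
    have fin2: "finite (insert (M / 2) (w ` (T - S)))" using finT by simp
    have b: "x < M" if "x \<in> w ` (T - S)" for x
    proof -
      from that obtain \<nu> where "\<nu> \<in> T" "\<nu> \<notin> S" "x = w \<nu>" by auto
      then show "x < M" using M_ge[of \<nu>] unfolding S_def by auto
    qed
    have "M'' < M" unfolding M''_def using Max_less_iff[OF fin2] b Mpos by auto
    moreover have "0 \<le> M''"
    proof -
      have "M / 2 \<le> M''" unfolding M''_def using fin2 by (intro Max_ge) auto
      then show ?thesis using Mpos by linarith
    qed
    moreover have "w \<nu> \<le> M''" if "\<nu> \<notin> S" for \<nu>
    proof (cases "\<nu> \<in> T")
      case True then show ?thesis unfolding M''_def using fin2 that by (intro Max_ge) auto
    next
      case False
      then have "w \<nu> < M / 2" unfolding T_def by auto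
      moreover have "M / 2 \<le> M''" unfolding M''_def using fin2 by (intro Max_ge) auto
      ultimately show ?thesis by simp
    qed
    ultimately show ?thesis using that by blast
  qed
  define sq where "sq \<nu> = (\<Sum>i\<in>UNIV. (\<nu> i)^2)" for \<nu> :: "'n \<Rightarrow> int"
  obtain \<nu>0 where \<nu>0: "\<nu>0 \<in> S" "\<And>\<mu>. \<mu> \<in> S \<Longrightarrow> sq \<mu> \<le> sq \<nu>0"
  proof -
    have "Max (sq ` S) \<in> sq ` S" using finS neS by (intro Max_in) auto
    then obtain \<nu>0 where "\<nu>0 \<in> S" "sq \<nu>0 = Max (sq ` S)" by auto
    moreover have "\<And>\<mu>. \<mu> \<in> S \<Longrightarrow> sq \<mu> \<le> Max (sq ` S)" using finS by (intro Max_ge) auto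
    ultimately show ?thesis using that by auto
  qed
  define lam where "lam \<nu> = (\<Sum>i\<in>UNIV. \<nu> i * \<nu>0 i)" for \<nu> :: "'n \<Rightarrow> int"
  have lam0: "lam \<nu>0 = sq \<nu>0" unfolding lam_def sq_def by (simp add: power2_eq_square)
  have key: "(\<Sum>i\<in>UNIV. (\<mu> i - \<nu>0 i)^2) = sq \<mu> - 2 * lam \<mu> + sq \<nu>0" for \<mu>
  proof -
    have "(\<Sum>i\<in>UNIV. (\<mu> i - \<nu>0 i)^2) = (\<Sum>i\<in>UNIV. ((\<mu> i)^2 + (\<nu>0 i)^2) - 2 * (\<mu> i * \<nu>0 i))"
      by (rule sum.cong) (auto simp: power2_eq_square algebra_simps)
    also have "\<dots> = ((\<Sum>i\<in>UNIV. (\<mu> i)^2) + (\<Sum>i\<in>UNIV. (\<nu>0 i)^2)) - 2 * (\<Sum>i\<in>UNIV. \<mu> i * \<nu>0 i)"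
      by (simp only: sum_subtractf sum.distrib sum_distrib_left)
    finally show ?thesis unfolding sq_def lam_def by simp
  qed
  have lam_le: "lam \<mu> \<le> lam \<nu>0" if "\<mu> \<in> S" for \<mu>
  proof -
    have "0 \<le> (\<Sum>i\<in>UNIV. (\<mu> i - \<nu>0 i)^2)" by (intro sum_nonneg) auto
    then show ?thesis using key[of \<mu>] \<nu>0(2)[OF that] lam0 by linarith
  qed
  have lam_eq: "\<mu> = \<nu>0" if "\<mu> \<in> S" "lam \<nu>0 \<le> lam \<mu>" for \<mu>
  proof -
    have "(\<Sum>i\<in>UNIV. (\<mu> i - \<nu>0 i)^2) \<le> 0" using key[of \<mu>] \<nu>0(2)[OF that(1)] lam0 that(2) by linarith
    moreover have "0 \<le> (\<Sum>i\<in>UNIV. (\<mu> i - \<nu>0 i)^2)" by (intro sum_nonneg) auto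
    ultimately have "(\<Sum>i\<in>UNIV. (\<mu> i - \<nu>0 i)^2) = 0" by (rule antisym)
    then have "\<forall>i\<in>UNIV. (\<mu> i - \<nu>0 i)^2 = 0"
      using sum_nonneg_eq_0_iff[of UNIV "\<lambda>i. (\<mu> i - \<nu>0 i)^2"] by simp
    then show ?thesis by auto
  qed
  have lam_diff: "lam (\<lambda>i. \<nu> i - \<mu> i) = lam \<nu> - lam \<mu>" for \<nu> \<mu>
    unfolding lam_def by (simp add: left_diff_distrib sum_subtractf)
  have lam_smul: "lam (\<lambda>i. int l * \<nu>0 i) = int l * lam \<nu>0" for l
    unfolding lam_def by (simp add: sum_distrib_left mult.assoc)
  have lam_zero: "lam (\<lambda>_. 0) = 0" unfolding lam_def by simp
  define u where "u = useq f S"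
  have u0: "u 0 = laurent_one" unfolding u_def by simp
  have uS: "u (Suc l) \<nu> = (\<Sum>\<mu>\<in>S. f \<mu> * u l (\<lambda>i. \<nu> i - \<mu> i))" for l \<nu> unfolding u_def by simp
  have U1: "\<forall>\<nu>. lam \<nu> > int l * lam \<nu>0 \<longrightarrow> u l \<nu> = 0" for l
  proof (induction l)
    case 0
    show ?case
    proof (intro allI impI)
      fix \<nu> assume "lam \<nu> > int 0 * lam \<nu>0"
      then have "\<nu> \<noteq> (\<lambda>_. 0)" using lam_zero by auto
      then show "u 0 \<nu> = 0" unfolding u0 laurent_one_def by simp
    qed
  next
    case (Suc l)
    show ?case
    proof (intro allI impI)
      fix \<nu> assume A: "lam \<nu> > int (Suc l) * lam \<nu>0"
      have "u l (\<lambda>i. \<nu> i - \<mu> i) = 0" if "\<mu> \<in> S" for \<mu>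
      proof -
        have "lam (\<lambda>i. \<nu> i - \<mu> i) > int l * lam \<nu>0"
          using A lam_le[OF that] unfolding lam_diff by (simp add: algebra_simps)
        then show ?thesis using Suc by blast
      qed
      then show "u (Suc l) \<nu> = 0" unfolding uS by simp
    qed
  qed
  have U2: "u l (\<lambda>i. int l * \<nu>0 i) = f \<nu>0 ^ l" for l
  proof (induction l)
    case 0
    then show ?case unfolding u0 laurent_one_def by simp
  next
    case (Suc l)
    let ?v = "\<lambda>i. int (Suc l) * \<nu>0 i"
    have z: "f \<mu> * u l (\<lambda>i. ?v i - \<mu> i) = 0" if "\<mu> \<in> S - {\<nu>0}" for \<mu>
    proof -
      have m: "\<mu> \<in> S" "\<mu> \<noteq> \<nu>0" using that by auto
      have "lam \<mu> < lam \<nu>0"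
      proof (rule ccontr)
        assume "\<not> lam \<mu> < lam \<nu>0"
        then have "lam \<nu>0 \<le> lam \<mu>" by simp
        from lam_eq[OF m(1) this] m(2) show False by simp
      qed
      then have "lam (\<lambda>i. ?v i - \<mu> i) > int l * lam \<nu>0"
        unfolding lam_diff lam_smul by (simp add: algebra_simps)
      then show ?thesis using U1 by simp
    qed
    have e: "(\<lambda>i. ?v i - \<nu>0 i) = (\<lambda>i. int l * \<nu>0 i)" by (auto simp: algebra_simps)
    have "u (Suc l) ?v = f \<nu>0 * u l (\<lambda>i. ?v i - \<nu>0 i) + (\<Sum>\<mu>\<in>S - {\<nu>0}. f \<mu> * u l (\<lambda>i. ?v i - \<mu> i))"
      unfolding uS using finS \<nu>0(1) by (rule sum.remove)
    also have "\<dots> = f \<nu>0 ^ Suc l" using z unfolding e Suc by simp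
    finally show ?case .
  qed
  have Ub: "\<forall>\<nu>. R (u l \<nu>) * rm \<nu> \<le> M ^ l" for l
  proof (induction l)
    case 0
    show ?case
    proof
      fix \<nu> show "R (u 0 \<nu>) * rm \<nu> \<le> M ^ 0"
        using R_one by (cases "\<nu> = (\<lambda>_. 0)") (simp_all add: u0 laurent_one_def rmono_zero)
    qed
  next
    case (Suc l)
    show ?case
    proof
      fix \<nu>
      have "R (u (Suc l) \<nu>) \<le> M ^ Suc l / rm \<nu>"
        unfolding uS
      proof (rule R_sum_le[OF finS])
        show "0 \<le> M ^ Suc l / rm \<nu>" using Mpos rm_pos[of \<nu>] by simp
        fix \<mu> assume "\<mu> \<in> S"
        then have "R (f \<mu>) * rm \<mu> \<le> M" using w_def S_def by simp
        then have "R (f \<mu> * u l (\<lambda>i. \<nu> i - \<mu> i)) * rm \<nu> \<le> M * M ^ l"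
          using Suc Mpos by (intro prod_bound) auto
        then show "R (f \<mu> * u l (\<lambda>i. \<nu> i - \<mu> i)) \<le> M ^ Suc l / rm \<nu>" unfolding R_div by simp
      qed
      then show "R (u (Suc l) \<nu>) * rm \<nu> \<le> M ^ Suc l" unfolding R_div .
    qed
  qed
  obtain C1 where C1: "\<And>l \<nu>. N (p l \<nu>) * rm \<nu> \<le> C1 * (M + 1) ^ l" using UB[of 1] by auto
  have V: "\<forall>\<nu>. R (p l \<nu> - u l \<nu>) * rm \<nu> \<le> M' * M ^ l / M" for l
  proof (induction l)
    case 0
    show ?case using M' Mpos by (simp add: p_0 u0)
  next
    case (Suc l)
    have Pb: "R (p l x) * rm x \<le> M ^ l" for x
    proof -
      have "R (p l x) = R (u l x + (p l x - u l x))" by simp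
      also have "\<dots> \<le> max (R (u l x)) (R (p l x - u l x))" by (rule R_add)
      finally have "R (p l x) * rm x \<le> max (R (u l x)) (R (p l x - u l x)) * rm x"
        using rm_pos[of x] by (intro mult_right_mono) auto
      also have "\<dots> = max (R (u l x) * rm x) (R (p l x - u l x) * rm x)"
        using rm_pos[of x] by (simp add: max_mult_distrib_right)
      also have "\<dots> \<le> M ^ l"
      proof -
        have "M' * M ^ l / M \<le> M ^ l" using M' Mpos by (simp add: divide_le_eq mult_right_mono)
        moreover have "R (u l x) * rm x \<le> M ^ l" using Ub[of l] by blast
        moreover have "R (p l x - u l x) * rm x \<le> M' * M ^ l / M" using Suc by blast
        ultimately show ?thesis by simp
      qed
      finally show ?thesis .
    qed
    show ?case
    proof
      fix \<nu>
      have hs: "has_nsum N (\<lambda>\<mu>. f \<mu> * p l (\<lambda>i. \<nu> i - \<mu> i)) UNIV (p (Suc l) \<nu>)"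
        unfolding p_Suc by (rule mult_exists[OF C1])
      have hf: "has_nsum N (\<lambda>\<mu>. if \<mu> \<in> S then f \<mu> * u l (\<lambda>i. \<nu> i - \<mu> i) else 0) UNIV (u (Suc l) \<nu>)"
        unfolding uS by (rule has_nsum_finite[OF finS])
      have hd: "has_nsum N (\<lambda>\<mu>. f \<mu> * p l (\<lambda>i. \<nu> i - \<mu> i) - (if \<mu> \<in> S then f \<mu> * u l (\<lambda>i. \<nu> i - \<mu> i) else 0))
          UNIV (p (Suc l) \<nu> - u (Suc l) \<nu>)"
        by (rule has_nsum_diff[OF hs hf])
      have "R (p (Suc l) \<nu> - u (Suc l) \<nu>) \<le> M' * M ^ l / rm \<nu>"
      proof (rule R_has_nsum[OF hd])
        show "0 \<le> M' * M ^ l / rm \<nu>" using M' Mpos rm_pos[of \<nu>] by simp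
        fix \<mu> :: "'n \<Rightarrow> int"
        show "R (f \<mu> * p l (\<lambda>i. \<nu> i - \<mu> i) - (if \<mu> \<in> S then f \<mu> * u l (\<lambda>i. \<nu> i - \<mu> i) else 0))
              \<le> M' * M ^ l / rm \<nu>"
        proof (cases "\<mu> \<in> S")
          case True
          then have a: "R (f \<mu>) * rm \<mu> \<le> M" using w_def S_def by simp
          have "R (f \<mu> * (p l (\<lambda>i. \<nu> i - \<mu> i) - u l (\<lambda>i. \<nu> i - \<mu> i))) * rm \<nu> \<le> M * (M' * M ^ l / M)"
            using Suc Mpos by (intro prod_bound[OF a]) auto
          then show ?thesis using True Mpos unfolding R_div by (simp add: right_diff_distrib)
        next
          case False
          then have a: "R (f \<mu>) * rm \<mu> \<le> M'" using M'(3) w_def by simp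
          have "R (f \<mu> * p l (\<lambda>i. \<nu> i - \<mu> i)) * rm \<nu> \<le> M' * M ^ l"
            using Pb M' by (intro prod_bound[OF a]) auto
          then show ?thesis using False unfolding R_div by simp
        qed
      qed
      then show "R (p (Suc l) \<nu> - u (Suc l) \<nu>) * rm \<nu> \<le> M' * M ^ Suc l / M"
        unfolding R_div using Mpos by simp
    qed
  qed
  have "M ^ l \<le> N (p l (\<lambda>i. int l * \<nu>0 i)) * rm (\<lambda>i. int l * \<nu>0 i)" if "l \<ge> 1" for l
  proof -
    let ?v = "\<lambda>i. int l * \<nu>0 i"
    let ?x = "p l ?v"
    let ?u = "u l ?v"
    have rv: "rm ?v = rm \<nu>0 ^ l" by (rule rmono_smul) (rule rpos)
    have "M ^ l = (R (f \<nu>0) * rm \<nu>0) ^ l" using \<nu>0(1) unfolding S_def w_def by simp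
    also have "\<dots> = R (f \<nu>0) ^ l * rm ?v" unfolding rv by (simp add: power_mult_distrib)
    also have "\<dots> \<le> R ?u * rm ?v" unfolding U2 using R_pow_ge[OF that] rm_pos
      by (intro mult_right_mono) (auto simp: less_imp_le)
    finally have Mu: "M ^ l \<le> R ?u * rm ?v" .
    have "R (?x - ?u) * rm ?v \<le> M' * M ^ l / M" using V by blast
    also have "\<dots> < M ^ l" using M' Mpos by (simp add: divide_less_eq mult_strict_right_mono)
    finally have lt0: "R (?x - ?u) * rm ?v < M ^ l" .
    then have "R (?x - ?u) * rm ?v < R ?u * rm ?v" using Mu by linarith
    then have lt: "R (?x - ?u) < R ?u" by (rule mult_right_less_imp_less) (simp add: rm_pos less_imp_le)
    have "R ?u = R (?x - (?x - ?u))" by simp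
    also have "\<dots> \<le> max (R ?x) (R (?x - ?u))" by (rule R_diff)
    finally have "R ?u \<le> R ?x" using lt by linarith
    then have "R ?u * rm ?v \<le> N ?x * rm ?v"
      using R_le_N[of ?x] rm_pos[of ?v] by (intro mult_right_mono) auto
    then show ?thesis using Mu by linarith
  qed
  then show ?thesis by blast
qed

end

context lctx
begin

lemma main_conv:
  "(\<lambda>l. laurent_norm N r (p l) powr (1 / real l)) \<longlonglongrightarrow> M"
proof (rule GL)
  obtain C1 where C1: "\<And>l \<nu>. N (p l \<nu>) * rm \<nu> \<le> C1 * (M + 1) ^ l" using UB[of 1] by auto
  have bdd: "bdd_above (range (\<lambda>\<nu>. N (p l \<nu>) * rm \<nu>))" for l
    using C1 by (intro bdd_aboveI2) blast
  have upper: "N (p l \<nu>) * rm \<nu> \<le> laurent_norm N r (p l)" for l \<nu>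
    unfolding laurent_norm_def using bdd by (intro cSUP_upper) auto
  show "0 \<le> laurent_norm N r (p l)" for l
    using upper[of l undefined] N_nonneg rm_pos[of undefined]
    by (smt (verit) mult_nonneg_nonneg)
  show "0 \<le> M" by (rule M_nonneg)
  show "M ^ l \<le> laurent_norm N r (p l)" if "l \<ge> 1" for l
  proof (cases "M = 0")
    case True
    then show ?thesis using that upper[of l undefined] N_nonneg rm_pos[of undefined]
      by (simp add: zero_power) (smt (verit) mult_nonneg_nonneg)
  next
    case False
    then have "M > 0" using M_nonneg by simp
    then obtain \<nu>0 where "\<forall>l\<ge>1. M ^ l \<le> N (p l (\<lambda>i. int l * \<nu>0 i)) * rm (\<lambda>i. int l * \<nu>0 i)"
      using LB by blast
    then show ?thesis using that upper[of l "\<lambda>i. int l * \<nu>0 i"] by force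
  qed
  show "\<exists>C. \<forall>l. laurent_norm N r (p l) \<le> C * (M + \<delta>) ^ l" if dp: "\<delta> > 0" for \<delta>
  proof -
    obtain C where C: "\<And>l \<nu>. N (p l \<nu>) * rm \<nu> \<le> C * (M + \<delta>) ^ l" using UB[OF dp] by auto
    have "laurent_norm N r (p l) \<le> C * (M + \<delta>) ^ l" for l
      unfolding laurent_norm_def using C by (intro cSUP_least) auto
    then show ?thesis by blast
  qed
qed

end

theorem proposition2p3:
  fixes N :: "'a::comm_ring_1 \<Rightarrow> real"
    and r :: "'n::finite \<Rightarrow> real"
    and f :: "('n \<Rightarrow> int) \<Rightarrow> 'a"
  assumes "nonarch_banach_ring N"
    and "\<forall>i. 0 < r i"
    and "f \<in> laurent_ring N r"
  shows "(\<exists>\<nu>. spectral_radius (laurent_norm N r) (laurent_pow N) f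
                 = spectral_radius N (\<lambda>a l. a ^ l) (f \<nu>) * rmono r \<nu>) \<and>
         (\<forall>\<nu>. spectral_radius N (\<lambda>a l. a ^ l) (f \<nu>) * rmono r \<nu>
                 \<le> spectral_radius (laurent_norm N r) (laurent_pow N) f)"
proof -
  have "lctx N r f" using assms unfolding lctx_def lctx_axioms_def nab_def by auto
  then interpret L: lctx N r f .
  have sr: "spectral_radius (laurent_norm N r) (laurent_pow N) f = L.M"
    unfolding spectral_radius_def using L.main_conv unfolding L.p_def by (rule limI)
  have w: "spectral_radius N (\<lambda>a l. a ^ l) (f \<nu>) * rmono r \<nu> = L.w \<nu>" for \<nu>
    unfolding L.w_def L.R_def ..
  obtain \<nu>1 where \<nu>1: "L.w \<nu>1 = L.M" using L.M_att by blast
  show ?thesis unfolding sr w using \<nu>1 L.M_ge by (intro conjI exI[of _ \<nu>1] allI) auto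
qed


end
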